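(* Let $c>1$, $\sigma=1-\frac1c$, and let $p,q\in[1,\infty)$ satisfy $(p-1)(q-1)=\sigma^2$. Then for every $\gamma\in[0,1]$ and every $m\ge1$, $$\Phi_r\!\left(\frac1m,\gamma\right)\ \ge\ \gamma^q\,m^{1+\frac qp-q}.$$
   Context: Work on $V=\{-1,1\}^d$ with the uniform probability measure $\mu$. For $x\in\{-1,1\}^d$, $N_\sigma(x)$ is the distribution of $y$ obtained by independently, for each coordinate $i$, setting $y_i=x_i$ with probability $\sigma$ and $y_i$ uniform in $\{-1,1\}$ otherwise. Let $e$ be the joint distribution of the pair $(x,y)$ with $x\sim\mu$ (data point) and $y\sim N_\sigma(x)$ (query); both marginals are $\mu$. The robust expansion is $$\Phi_r(\delta,\gamma)=\min_{A\subseteq V:\ 0<\mu(A)\le\delta}\ \ \min_{B\subseteq V:\ \Pr_{(x,y)\sim e}[x\in B\mid y\in A]\ge\gamma}\ \frac{\mu(B)}{\mu(A)}.$$ *)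

theory Defs
  imports Complex_Main "HOL-Library.Extended_Real"
begin

definition cube :: "nat \<Rightarrow> int list set" where
  "cube d = {x. length x = d \<and> set x \<subseteq> {-1, 1}}"

definition mu :: "nat \<Rightarrow> int list set \<Rightarrow> real" where
  "mu d A = real (card A) / 2 ^ d"

text \<open>Probability that N_sigma(x) outputs y: each coordinate kept with prob. sigma,
  otherwise resampled uniformly, so agreement has probability (1+sigma)/2.\<close>
definition noise :: "real \<Rightarrow> int list \<Rightarrow> int list \<Rightarrow> real" where
  "noise \<sigma> x y = (\<Prod>i<length x. if x ! i = y ! i then (1 + \<sigma>) / 2 else (1 - \<sigma>) / 2)"

definition joint :: "nat \<Rightarrow> real \<Rightarrow> int list \<Rightarrow> int list \<Rightarrow> real" where
  "joint d \<sigma> x y = noise \<sigma> x y / 2 ^ d"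

definition cond_prob :: "nat \<Rightarrow> real \<Rightarrow> int list set \<Rightarrow> int list set \<Rightarrow> real" where
  "cond_prob d \<sigma> B A = (\<Sum>x\<in>B. \<Sum>y\<in>A. joint d \<sigma> x y) / mu d A"

text \<open>Robust expansion; minimum over an empty family is +infinity.\<close>
definition Phi_r :: "nat \<Rightarrow> real \<Rightarrow> real \<Rightarrow> real \<Rightarrow> ereal" where
  "Phi_r d \<sigma> \<delta> \<gamma> = Inf {ereal (mu d B / mu d A) | A B.
      A \<subseteq> cube d \<and> 0 < mu d A \<and> mu d A \<le> \<delta> \<and>
      B \<subseteq> cube d \<and> cond_prob d \<sigma> B A \<ge> \<gamma>}"

end

theory Submission
  imports Defs "HOL-Analysis.Analysis"
begin

lemma gch_Suc: "(a::real) gchoose (Suc n) = (a gchoose n) * (a - real n) / real (Suc n)"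
proof -
  have "real (Suc n) * (a gchoose Suc n) = (a - real n) * (a gchoose n)"
    using gbinomial_absorption[of n a] gbinomial_absorb_comp[of a n] by simp
  then show ?thesis by (simp add: field_simps del: of_nat_Suc)
qed

lemma gch_SS: "(a::real) gchoose (Suc (Suc n)) = (a gchoose n) * ((a - real n) * (a - real n - 1)) / ((real n + 1) * (real n + 2))"
  by (simp add: gch_Suc field_simps)

lemma coef_bound:
  fixes p s r :: real
  assumes "1 < p" "p \<le> s" "s \<le> 2" "r = (p - 1) / (s - 1)"
  shows "0 \<le> (p/s) * (s gchoose (2*k+2)) * r^(k+1) \<and> (p/s) * (s gchoose (2*k+2)) * r^(k+1) \<le> p gchoose (2*k+2)"
proof (induction k)
  case 0
  have "(p/s) * (s gchoose 2) * r = p gchoose 2"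
    proof -
    have h: "p = 1 + r * s - r" using assms by (simp add: field_simps)
    have "s \<noteq> 0" using assms by simp
    then show ?thesis by (simp add: gch_Suc numeral_2_eq_2 field_simps) (simp add: h algebra_simps)
  qed
  moreover have "0 \<le> p gchoose 2" using assms by (simp add: gch_Suc numeral_2_eq_2)
  ultimately show ?case by (simp add: numeral_2_eq_2)
next
  case (Suc k)
  define n where "n = 2*k+2"
  have n2: "real n \<ge> 2" unfolding n_def by simp
  have e: "2 * Suc k + 2 = Suc (Suc n)" unfolding n_def by simp
  define A where "A = (p/s) * (s gchoose n) * r^(k+1)"
  define B where "B = p gchoose n"
  have AB: "0 \<le> A" "A \<le> B" using Suc unfolding A_def B_def n_def by auto
  define \<alpha> where "\<alpha> = (s - real n) * (s - real n - 1) * r / ((real n + 1) * (real n + 2))"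
  define \<beta> where "\<beta> = (p - real n) * (p - real n - 1) / ((real n + 1) * (real n + 2))"
  have r01: "0 \<le> r" "r \<le> 1" unfolding assms(4) using assms(1-3) by (auto intro: divide_nonneg_pos)
  have f1: "0 \<le> (s - real n) * (s - real n - 1)" using assms n2
    by (intro mult_nonpos_nonpos) auto
  have f2: "(s - real n) * (s - real n - 1) * r \<le> (p - real n) * (p - real n - 1)"
  proof -
    have "(s - real n) * (s - real n - 1) * r \<le> (s - real n) * (s - real n - 1)"
      using f1 r01 by (simp add: mult_left_le)
    also have "\<dots> = (real n - s) * (real n + 1 - s)" by (simp add: algebra_simps)
    also have "\<dots> \<le> (real n - p) * (real n + 1 - p)"
      using assms n2 by (intro mult_mono) auto
    also have "\<dots> = (p - real n) * (p - real n - 1)" by (simp add: algebra_simps)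
    finally show ?thesis .
  qed
  have a0: "0 \<le> \<alpha>" unfolding \<alpha>_def using mult_nonneg_nonneg[OF f1 r01(1)] by (intro divide_nonneg_pos) auto
  have ab: "\<alpha> \<le> \<beta>" unfolding \<alpha>_def \<beta>_def using f2 by (intro divide_right_mono) auto
  have L: "(p/s) * (s gchoose (2 * Suc k + 2)) * r^(Suc k+1) = A * \<alpha>"
    unfolding e A_def \<alpha>_def gch_SS by (simp add: field_simps)
  have R: "p gchoose (2 * Suc k + 2) = B * \<beta>"
    unfolding e B_def \<beta>_def gch_SS by (simp add: field_simps)
  show ?case unfolding L R using AB a0 ab
    by (auto intro: mult_mono mult_nonneg_nonneg)
qed


definition M :: "real \<Rightarrow> real \<Rightarrow> real" where
  "M r x = ((1 + x) powr r + (1 - x) powr r) / 2"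

lemma M_sums:
  assumes "\<bar>x\<bar> < 1"
  shows "(\<lambda>n. (r gchoose n) * x^n * ((1 + (-1)^n) / 2)) sums M r x"
proof -
  have s1: "(\<lambda>n. (r gchoose n) * x^n) sums (1 + x) powr r" using assms by (rule gen_binomial_real)
  have s2: "(\<lambda>n. (r gchoose n) * (-x)^n) sums (1 + -x) powr r" using assms by (intro gen_binomial_real) simp
  have "(\<lambda>n. ((r gchoose n) * x^n + (r gchoose n) * (-x)^n) / 2) sums (((1 + x) powr r + (1 + -x) powr r) / 2)"
    by (intro sums_divide sums_add s1 s2)
  moreover have "\<And>n. ((r gchoose n) * x^n + (r gchoose n) * (-x)^n) / 2 = (r gchoose n) * x^n * ((1 + (-1)^n) / 2)"
    by (simp add: power_minus' field_simps)
  ultimately show ?thesis unfolding M_def by simp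
qed

lemma M_pos: "\<bar>x\<bar> < 1 \<Longrightarrow> 0 < M r x"
  unfolding M_def by (intro divide_pos_pos add_pos_pos) auto

lemma M_nonneg: "0 \<le> M r x"
  unfolding M_def by simp

lemma core_open:
  fixes p s a :: real
  assumes "1 < p" "p < s" "s \<le> 2" "\<bar>a\<bar> < 1"
  shows "M s (sqrt ((p - 1) / (s - 1)) * a) powr (p/s) \<le> M p a"
proof -
  define r where "r = (p - 1) / (s - 1)"
  define \<rho> where "\<rho> = sqrt r"
  have r01: "0 \<le> r" "r < 1" using assms unfolding r_def by (auto simp: field_simps)
  have rho: "0 \<le> \<rho>" "\<rho> < 1" "\<rho>^2 = r" using r01 unfolding \<rho>_def by auto
  have "\<rho> * \<bar>a\<bar> \<le> \<rho>" using assms rho by (intro mult_left_le) auto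
  then have xa: "\<bar>\<rho> * a\<bar> < 1" using rho by (simp add: abs_mult)
  define X where "X = M s (\<rho> * a)"
  have X0: "0 < X" unfolding X_def using xa by (rule M_pos)
  have ps: "0 \<le> p/s" "p/s \<le> 1" "0 \<le> 1 - p/s" using assms by auto
  have Y: "X powr (p/s) * 1 powr (1 - p/s) \<le> (p/s) * X + (1 - p/s) * 1"
    using ps X0 by (intro Youngs_inequality_0) auto
  have S1: "(\<lambda>n. (p/s) * ((s gchoose n) * (\<rho> * a)^n * ((1 + (-1)^n) / 2)) + (if n = 0 then 1 - p/s else 0))
       sums ((p/s) * X + (1 - p/s))"
    unfolding X_def
    by (intro sums_add sums_mult M_sums xa) (rule sums_single[of 0 "\<lambda>_. 1 - p/s", simplified])
  have S2: "(\<lambda>n. (p gchoose n) * a^n * ((1 + (-1)^n) / 2)) sums M p a"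
    using assms by (intro M_sums) simp
  have T: "(p/s) * ((s gchoose n) * (\<rho> * a)^n * ((1 + (-1)^n) / 2)) + (if n = 0 then 1 - p/s else 0)
        \<le> (p gchoose n) * a^n * ((1 + (-1)^n) / 2)" for n
  proof (cases "even n")
    case False
    then have "n \<noteq> 0" by (metis even_zero)
    with False show ?thesis by simp
  next
    case True
    show ?thesis
    proof (cases "n = 0")
      case True then show ?thesis by simp
    next
      case False
      obtain m where m: "n = 2*m" using \<open>even n\<close> by (rule evenE)
      with False obtain k where "m = Suc k" by (cases m) auto
      then have k: "n = 2*k+2" using m by simp
      have "2*k+2 = 2*(k+1)" by simp
      then have "\<rho>^n = (\<rho>^2)^(k+1)" unfolding k by (simp only: power_mult)
      then have "\<rho>^n = r^(k+1)" using rho(3) by simp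
      moreover have an: "0 \<le> a^n" using \<open>even n\<close> by (simp add: zero_le_even_power)
      moreover have "(p/s) * (s gchoose n) * r^(k+1) \<le> p gchoose n"
        using coef_bound[OF assms(1) less_imp_le[OF assms(2)] assms(3) r_def, of k] k by simp
      ultimately have "(p/s) * (s gchoose n) * \<rho>^n * a^n \<le> (p gchoose n) * a^n"
        by (metis mult_right_mono)
      then show ?thesis using \<open>even n\<close> False by (simp add: power_mult_distrib mult_ac)
    qed
  qed
  have "(p/s) * X + (1 - p/s) \<le> M p a" by (rule sums_le[OF T S1 S2])
  with Y show ?thesis unfolding X_def \<rho>_def r_def by simp
qed


lemma M_cont: "continuous_on {-1..1} (\<lambda>a. M r (c * a))" if "r > 0" "\<bar>c\<bar> \<le> 1"
proof -
  have "\<forall>x\<in>{-1..1}. 0 \<le> 1 + c * x \<and> 0 \<le> 1 - c * x"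
  proof
    fix x :: real assume "x \<in> {-1..1}"
    then have "\<bar>c * x\<bar> \<le> 1" using that unfolding abs_mult by (intro mult_le_one) auto
    then show "0 \<le> 1 + c * x \<and> 0 \<le> 1 - c * x" by auto
  qed
  then show ?thesis unfolding M_def using that
    by (intro continuous_intros continuous_on_powr') auto
qed

lemma core:
  fixes p s a :: real
  assumes "1 < p" "p < s" "s \<le> 2" "\<bar>a\<bar> \<le> 1"
  shows "M s (sqrt ((p - 1) / (s - 1)) * a) powr (1/s) \<le> M p a powr (1/p)"
proof -
  define \<rho> where "\<rho> = sqrt ((p - 1) / (s - 1))"
  have rho: "0 \<le> \<rho>" "\<rho> \<le> 1" using assms unfolding \<rho>_def by (auto simp: field_simps)
  have pos: "\<And>a. a \<in> {-1..1} \<Longrightarrow> 0 < M s (\<rho> * a)"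
  proof -
    fix a :: real assume "a \<in> {-1..1}"
    then have "\<bar>a\<bar> \<le> 1" by auto
    have "(p - 1) / (s - 1) < 1" using assms by (auto simp: field_simps)
    then have "\<rho> < 1" unfolding \<rho>_def by simp
    moreover have "\<rho> * \<bar>a\<bar> \<le> \<rho>" using \<open>\<bar>a\<bar> \<le> 1\<close> rho by (intro mult_left_le) auto
    ultimately have "\<bar>\<rho> * a\<bar> < 1" using rho by (simp add: abs_mult)
    then show "0 < M s (\<rho> * a)" by (rule M_pos)
  qed
  have c1: "continuous_on {-1..1} (\<lambda>a. M p a)" using M_cont[of p 1] assms by simp
  have c2: "continuous_on {-1..1} (\<lambda>a. M s (\<rho> * a))" using M_cont[of s \<rho>] assms rho by simp
  have c3: "continuous_on {-1..1} (\<lambda>a. M s (\<rho> * a) powr (p/s))"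
    by (rule continuous_on_powr'[OF c2]) (use pos M_nonneg assms in auto)
  have cont: "continuous_on (closure {-1<..<1}) (\<lambda>a. M p (1 * a) - M s (\<rho> * a) powr (p/s))"
    using continuous_on_diff[OF c1 c3] by simp
  have "0 \<le> M p (1 * a) - M s (\<rho> * a) powr (p/s)"
    by (rule continuous_ge_on_closure[OF cont]) (use assms core_open[of p s] in \<open>auto simp: \<rho>_def\<close>)
  then have h: "M s (\<rho> * a) powr (p/s) \<le> M p a" by simp
  have "(M s (\<rho> * a) powr (p/s)) powr (1/p) \<le> M p a powr (1/p)"
    using h assms by (intro powr_mono2) auto
  also have "(M s (\<rho> * a) powr (p/s)) powr (1/p) = M s (\<rho> * a) powr (1/s)"
    using assms by (simp add: powr_powr)
  finally show ?thesis unfolding \<rho>_def .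
qed


lemma holder2:
  fixes u1 u2 v1 v2 q r :: real
  assumes "q > 1" "r > 1" "1/q + 1/r = 1" "0 \<le> u1" "0 \<le> u2" "0 \<le> v1" "0 \<le> v2"
  shows "(u1 * v1 + u2 * v2) / 2 \<le> ((u1 powr q + u2 powr q) / 2) powr (1/q) * ((v1 powr r + v2 powr r) / 2) powr (1/r)"
proof -
  define U where "U = ((u1 powr q + u2 powr q) / 2) powr (1/q)"
  define V where "V = ((v1 powr r + v2 powr r) / 2) powr (1/r)"
  show ?thesis
  proof (cases "U = 0 \<or> V = 0")
    case True
    then have "(u1 = 0 \<and> u2 = 0) \<or> (v1 = 0 \<and> v2 = 0)"
      unfolding U_def V_def using assms
      by (auto simp: add_nonneg_eq_0_iff)
    then show ?thesis using assms by (auto simp: U_def V_def)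
  next
    case False
    then have U0: "U > 0" and V0: "V > 0" unfolding U_def V_def by auto
    have Uq: "U powr q = (u1 powr q + u2 powr q) / 2"
      unfolding U_def using assms by (simp add: powr_powr)
    have Vr: "V powr r = (v1 powr r + v2 powr r) / 2"
      unfolding V_def using assms by (simp add: powr_powr)
    have y: "(u / U) * (v / V) \<le> (u powr q / U powr q) / q + (v powr r / V powr r) / r"
      if "0 \<le> u" "0 \<le> v" for u v
      using Youngs_inequality[OF assms(1-3), of "u/U" "v/V"] that U0 V0
      by (simp add: powr_divide)
    have "(u1/U)*(v1/V) + (u2/U)*(v2/V) \<le>
       ((u1 powr q + u2 powr q) / U powr q) / q + ((v1 powr r + v2 powr r) / V powr r) / r"
      using y[OF assms(4,6)] y[OF assms(5,7)] by (simp add: add_divide_distrib)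
    also have "\<dots> = 2 / q + 2 / r"
    proof -
      have "u1 powr q + u2 powr q = 2 * U powr q" using Uq by simp
      moreover have "v1 powr r + v2 powr r = 2 * V powr r" using Vr by simp
      moreover have "U powr q > 0" "V powr r > 0" using U0 V0 by auto
      ultimately show ?thesis by simp
    qed
    also have "\<dots> = 2" using assms(3) by (simp add: field_simps) 
    moreover have "(u1/U)*(v1/V) + (u2/U)*(v2/V) = (u1 * v1 + u2 * v2) / (U * V)"
      by (simp add: add_divide_distrib)
    ultimately have "(u1 * v1 + u2 * v2) / (U * V) \<le> 2" by linarith
    then have "u1 * v1 + u2 * v2 \<le> 2 * (U * V)" using U0 V0 by (simp add: divide_le_eq)
    then show ?thesis unfolding U_def[symmetric] V_def[symmetric] by simp
  qed
qed



lemma G_half: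
  fixes p q \<sigma> a b :: real
  assumes "p > 1" "q \<ge> 2" "\<sigma> \<ge> 0" "\<sigma>^2 = (p-1)*(q-1)" "\<sigma> < 1" "\<bar>a\<bar> \<le> 1" "\<bar>b\<bar> \<le> 1"
  shows "1 + \<sigma>*a*b \<le> M p a powr (1/p) * M q b powr (1/q)"
proof -
  define q' where "q' = q / (q - 1)"
  have q1: "q' - 1 = 1 / (q - 1)" unfolding q'_def using assms by (simp add: field_simps)
  have "1 / (q - 1) > 0" using assms by simp
  then have q'1: "q' > 1" using q1 by linarith
  have "1 / (q - 1) \<le> 1" using assms by simp
  then have q'2: "q' \<le> 2" using q1 by linarith
  have qq: "1/q + 1/q' = 1" unfolding q'_def using assms by (simp add: field_simps)
  have "\<sigma>*\<sigma> \<le> \<sigma>" using assms by (simp add: mult_left_le_one_le)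
  then have "\<sigma>^2 < 1" using assms by (simp add: power2_eq_square)
  then have "(p-1)*(q-1) < 1" using assms by simp
  then have "p - 1 < 1 / (q - 1)" using assms by (simp add: less_divide_eq)
  then have pq': "p < q'" using q1 by linarith
  have "(p - 1) / (q' - 1) = \<sigma>^2" unfolding q1 using assms by simp
  then have rho: "sqrt ((p - 1) / (q' - 1)) = \<sigma>"
    using real_sqrt_abs[of \<sigma>] assms(3) by simp
  have sa: "\<bar>\<sigma> * a\<bar> \<le> 1" using assms unfolding abs_mult by (intro mult_le_one) auto
  have H: "(((1+b)*(1+\<sigma>*a) + (1-b)*(1-\<sigma>*a)) / 2)
      \<le> (((1+b) powr q + (1-b) powr q) / 2) powr (1/q) * (((1+\<sigma>*a) powr q' + (1-\<sigma>*a) powr q') / 2) powr (1/q')"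
    using assms sa q'1 qq by (intro holder2) auto
  have e: "((1+b)*(1+\<sigma>*a) + (1-b)*(1-\<sigma>*a)) / 2 = 1 + \<sigma>*a*b" by (simp add: algebra_simps)
  have C: "M q' (\<sigma> * a) powr (1/q') \<le> M p a powr (1/p)"
    using core[OF assms(1) pq' q'2 assms(6)] rho by simp
  have "1 + \<sigma>*a*b \<le> M q b powr (1/q) * M q' (\<sigma> * a) powr (1/q')"
    using H unfolding e M_def .
  also have "\<dots> \<le> M q b powr (1/q) * M p a powr (1/p)"
    using C by (intro mult_left_mono) auto
  finally show ?thesis by (simp add: mult.commute)
qed

lemma G_norm:
  fixes p q \<sigma> a b :: real
  assumes "p > 1" "q > 1" "\<sigma> \<ge> 0" "\<sigma>^2 = (p-1)*(q-1)" "\<sigma> < 1" "\<bar>a\<bar> \<le> 1" "\<bar>b\<bar> \<le> 1"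
  shows "1 + \<sigma>*a*b \<le> M p a powr (1/p) * M q b powr (1/q)"
proof (cases "q \<ge> 2")
  case True then show ?thesis using G_half assms by blast
next
  case q2: False
  show ?thesis
  proof (cases "p \<ge> 2")
    case True
    have "1 + \<sigma>*b*a \<le> M q b powr (1/q) * M p a powr (1/p)"
      using G_half[of q p \<sigma> b a] True assms by (simp add: mult.commute)
    then show ?thesis by (simp add: mult_ac)
  next
    case False
    define x where "x = sqrt (p - 1) * a"
    define y where "y = sqrt (q - 1) * b"
    have xy: "x * y = \<sigma> * a * b"
    proof -
      have "sqrt (p - 1) * sqrt (q - 1) = \<sigma>"
        using assms by (simp add: real_sqrt_mult[symmetric] real_sqrt_unique)
      then show ?thesis unfolding x_def y_def by (simp add: mult_ac)
    qed
    have hx: "\<bar>x\<bar> \<le> 1" unfolding x_def abs_mult using assms False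
      by (intro mult_le_one) (auto simp: real_sqrt_le_1_iff)
    have hy: "\<bar>y\<bar> \<le> 1" unfolding y_def abs_mult using assms q2
      by (intro mult_le_one) (auto simp: real_sqrt_le_1_iff)
    have M2: "M 2 z = 1 + z^2" if "\<bar>z\<bar> \<le> 1" for z
      using that unfolding M_def by (simp add: power2_eq_square algebra_simps)
    have Cx: "sqrt (1 + x^2) \<le> M p a powr (1/p)"
      using core[of p 2 a] assms False M2[OF hx] unfolding x_def
      by (simp add: powr_half_sqrt)
    have Cy: "sqrt (1 + y^2) \<le> M q b powr (1/q)"
      using core[of q 2 b] assms q2 M2[OF hy] unfolding y_def
      by (simp add: powr_half_sqrt)
    have "1 + x*y \<le> sqrt (1 + x^2) * sqrt (1 + y^2)"
    proof (cases "1 + x*y \<ge> 0")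
      case True
      have "(1 + x*y)^2 \<le> (1 + x^2) * (1 + y^2)"
        using sum_squares_ge_zero[of "x - y" 0] by (simp add: power2_eq_square algebra_simps)
      then show ?thesis by (simp add: real_sqrt_mult[symmetric] real_le_rsqrt)
    next
      case False
      have "0 \<le> sqrt (1 + x^2) * sqrt (1 + y^2)" by simp
      with False show ?thesis by linarith
    qed
    also have "\<dots> \<le> M p a powr (1/p) * M q b powr (1/q)"
      using Cx Cy by (intro mult_mono) auto
    finally show ?thesis using xy by simp
  qed
qed


lemma hom_M:
  fixes x1 x2 p :: real
  assumes "0 \<le> x1" "0 \<le> x2" "x1 + x2 > 0" "p > 0"
  defines "X \<equiv> (x1 + x2) / 2" and "a \<equiv> (x1 - x2) / (x1 + x2)"
  shows "((x1 powr p + x2 powr p) / 2) powr (1/p) = X * M p a powr (1/p)" "\<bar>a\<bar> \<le> 1" "X > 0"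
proof -
  show X0: "X > 0" unfolding X_def using assms by simp
  have e1: "x1 = X * (1 + a)" unfolding X_def a_def using assms by (simp add: field_simps)
  have e2: "x2 = X * (1 - a)" unfolding X_def a_def using assms by (simp add: field_simps)
  show "\<bar>a\<bar> \<le> 1" unfolding a_def using assms by (simp add: abs_le_iff field_simps)
  then have a1: "0 \<le> 1 + a" "0 \<le> 1 - a" by auto
  have "(x1 powr p + x2 powr p) / 2 = X powr p * M p a"
  proof -
    have "x1 powr p = X powr p * (1 + a) powr p" using X0 a1 by (subst e1) (intro powr_mult; simp)
    moreover have "x2 powr p = X powr p * (1 - a) powr p" using X0 a1 by (subst e2) (intro powr_mult; simp)
    ultimately show ?thesis unfolding M_def by (simp add: algebra_simps)
  qed
  then have "((x1 powr p + x2 powr p) / 2) powr (1/p) = (X powr p) powr (1/p) * M p a powr (1/p)"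
    by (simp add: powr_mult M_nonneg)
  also have "(X powr p) powr (1/p) = X" using X0 assms by (simp add: powr_powr)
  finally show "((x1 powr p + x2 powr p) / 2) powr (1/p) = X * M p a powr (1/p)" .
qed

lemma G2:
  fixes p q \<sigma> x1 x2 y1 y2 :: real
  assumes "p > 1" "q > 1" "\<sigma> \<ge> 0" "\<sigma>^2 = (p-1)*(q-1)" "\<sigma> < 1"
    and "0 \<le> x1" "0 \<le> x2" "0 \<le> y1" "0 \<le> y2"
  shows "((1+\<sigma>)*(x1*y1+x2*y2) + (1-\<sigma>)*(x1*y2+x2*y1))/4
     \<le> ((x1 powr p + x2 powr p)/2) powr (1/p) * ((y1 powr q + y2 powr q)/2) powr (1/q)"
proof (cases "x1 + x2 = 0 \<or> y1 + y2 = 0")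
  case True
  then have "(x1 = 0 \<and> x2 = 0) \<or> (y1 = 0 \<and> y2 = 0)" using assms by auto
  then show ?thesis using assms by auto
next
  case False
  then have xp: "x1 + x2 > 0" and yp: "y1 + y2 > 0" using assms by auto
  define X where "X = (x1 + x2) / 2"
  define a where "a = (x1 - x2) / (x1 + x2)"
  define Y where "Y = (y1 + y2) / 2"
  define b where "b = (y1 - y2) / (y1 + y2)"
  have p0: "p > 0" "q > 0" using assms by auto
  note hx = hom_M[OF assms(6,7) xp p0(1), folded X_def a_def]
  note hy = hom_M[OF assms(8,9) yp p0(2), folded Y_def b_def]
  have e1: "x1 = X * (1 + a)" "x2 = X * (1 - a)" unfolding X_def a_def using xp by (simp_all add: field_simps)
  have e2: "y1 = Y * (1 + b)" "y2 = Y * (1 - b)" unfolding Y_def b_def using yp by (simp_all add: field_simps)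
  have L: "((1+\<sigma>)*(x1*y1+x2*y2) + (1-\<sigma>)*(x1*y2+x2*y1))/4 = X * Y * (1 + \<sigma>*a*b)"
    unfolding e1 e2 by (simp add: algebra_simps)
  have "X * Y * (1 + \<sigma>*a*b) \<le> X * Y * (M p a powr (1/p) * M q b powr (1/q))"
    using G_norm[OF assms(1-5) hx(2) hy(2)] hx(3) hy(3) by (intro mult_left_mono) auto
  then show ?thesis unfolding L hx(1) hy(1) using assms by (simp add: mult_ac)
qed


lemma cube_0: "cube 0 = {[]}" unfolding cube_def by auto

lemma finite_cube: "finite (cube d)"
proof -
  have "cube d = {xs. set xs \<subseteq> {-1,1} \<and> length xs = d}" unfolding cube_def by auto
  then show ?thesis by (simp add: finite_lists_length_eq)
qed

lemma cube_Suc: "cube (Suc d) = Cons 1 ` cube d \<union> Cons (-1) ` cube d"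
  unfolding cube_def by (auto simp: length_Suc_conv)

lemma sum_cube_Suc: "sum F (cube (Suc d)) = sum (\<lambda>t. F (1#t)) (cube d) + sum (\<lambda>t. F ((-1)#t)) (cube d)"
proof -
  have "sum F (cube (Suc d)) = sum F (Cons 1 ` cube d) + sum F (Cons (-1) ` cube d)"
    unfolding cube_Suc by (rule sum.union_disjoint) (auto simp: finite_cube)
  also have "\<dots> = sum (\<lambda>t. F (1#t)) (cube d) + sum (\<lambda>t. F ((-1)#t)) (cube d)"
    by (simp add: sum.reindex)
  finally show ?thesis .
qed

lemma noise_Cons: "noise \<sigma> (h#t) (h'#t') = (if h = h' then (1+\<sigma>)/2 else (1-\<sigma>)/2) * noise \<sigma> t t'"
  unfolding noise_def by (simp only: length_Cons prod.lessThan_Suc_shift nth_Cons_0 nth_Cons_Suc)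

lemma tensor:
  fixes p q \<sigma> :: real
  assumes "p > 1" "q > 1" "\<sigma> \<ge> 0" "\<sigma>^2 = (p-1)*(q-1)" "\<sigma> < 1"
  shows "\<forall>f g. (\<forall>x. 0 \<le> f x) \<longrightarrow> (\<forall>y. 0 \<le> g y) \<longrightarrow>
    (\<Sum>x\<in>cube d. \<Sum>y\<in>cube d. f x * g y * noise \<sigma> x y) / 2^d
      \<le> ((\<Sum>x\<in>cube d. f x powr p) / 2^d) powr (1/p) * ((\<Sum>y\<in>cube d. g y powr q) / 2^d) powr (1/q)"
proof (induction d)
  case 0
  show ?case
  proof (intro allI impI)
    fix f g :: "int list \<Rightarrow> real"
    assume "\<forall>x. 0 \<le> f x" "\<forall>y. 0 \<le> g y"
    then show "(\<Sum>x\<in>cube 0. \<Sum>y\<in>cube 0. f x * g y * noise \<sigma> x y) / 2^0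
      \<le> ((\<Sum>x\<in>cube 0. f x powr p) / 2^0) powr (1/p) * ((\<Sum>y\<in>cube 0. g y powr q) / 2^0) powr (1/q)"
      using assms by (simp add: cube_0 noise_def powr_powr)
  qed
next
  case (Suc d)
  show ?case
  proof (intro allI impI)
    fix f g :: "int list \<Rightarrow> real"
    assume f0: "\<forall>x. 0 \<le> f x" and g0: "\<forall>y. 0 \<le> g y"
    define S where "S h h' = (\<Sum>t\<in>cube d. \<Sum>t'\<in>cube d. f (h#t) * g (h'#t') * noise \<sigma> t t')" for h h'
    define F where "F h = ((\<Sum>t\<in>cube d. f (h#t) powr p) / 2^d) powr (1/p)" for h
    define G where "G h = ((\<Sum>t\<in>cube d. g (h#t) powr q) / 2^d) powr (1/q)" for h
    have IH: "S h h' / 2^d \<le> F h * G h'" for h h'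
      using Suc.IH[rule_format, of "\<lambda>t. f (h#t)" "\<lambda>t. g (h'#t)"] f0 g0 unfolding S_def F_def G_def by auto
    have Fp: "F h powr p = (\<Sum>t\<in>cube d. f (h#t) powr p) / 2^d" for h
      unfolding F_def using assms by (simp add: powr_powr sum_nonneg)
    have Gq: "G h powr q = (\<Sum>t\<in>cube d. g (h#t) powr q) / 2^d" for h
      unfolding G_def using assms by (simp add: powr_powr sum_nonneg)
    have Fn: "0 \<le> F h" "0 \<le> G h" for h unfolding F_def G_def by auto
    have L: "(\<Sum>x\<in>cube (Suc d). \<Sum>y\<in>cube (Suc d). f x * g y * noise \<sigma> x y)
       = (1+\<sigma>)/2 * (S 1 1 + S (-1) (-1)) + (1-\<sigma>)/2 * (S 1 (-1) + S (-1) 1)"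
      unfolding S_def by (simp add: sum_cube_Suc noise_Cons sum.distrib sum_distrib_left algebra_simps)
    have "(\<Sum>x\<in>cube (Suc d). \<Sum>y\<in>cube (Suc d). f x * g y * noise \<sigma> x y) / 2^(Suc d)
       = ((1+\<sigma>) * (S 1 1 / 2^d + S (-1) (-1) / 2^d) + (1-\<sigma>) * (S 1 (-1) / 2^d + S (-1) 1 / 2^d)) / 4"
      unfolding L by (simp add: field_simps)
    also have "\<dots> \<le> ((1+\<sigma>) * (F 1 * G 1 + F (-1) * G (-1)) + (1-\<sigma>) * (F 1 * G (-1) + F (-1) * G 1)) / 4"
      using assms by (intro divide_right_mono add_mono mult_left_mono IH) auto
    also have "\<dots> \<le> ((F 1 powr p + F (-1) powr p)/2) powr (1/p) * ((G 1 powr q + G (-1) powr q)/2) powr (1/q)"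
      by (rule G2[OF assms]) (simp_all add: Fn)
    also have "\<dots> = ((\<Sum>x\<in>cube (Suc d). f x powr p) / 2^(Suc d)) powr (1/p) * ((\<Sum>y\<in>cube (Suc d). g y powr q) / 2^(Suc d)) powr (1/q)"
      unfolding Fp Gq sum_cube_Suc by (simp add: field_simps)
    finally show "(\<Sum>x\<in>cube (Suc d). \<Sum>y\<in>cube (Suc d). f x * g y * noise \<sigma> x y) / 2^(Suc d)
       \<le> ((\<Sum>x\<in>cube (Suc d). f x powr p) / 2^(Suc d)) powr (1/p) * ((\<Sum>y\<in>cube (Suc d). g y powr q) / 2^(Suc d)) powr (1/q)" .
  qed
qed


lemma sum_restrict_cube:
  assumes "B \<subseteq> cube d"
  shows "(\<Sum>x\<in>cube d. if x \<in> B then h x else 0) = (\<Sum>x\<in>B. h x)"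
proof -
  have "cube d \<inter> B = B" using assms by auto
  then show ?thesis using sum.inter_restrict[OF finite_cube[of d], where g=h and B=B, symmetric] by simp
qed

lemma key:
  fixes p q \<sigma> \<gamma> m :: real
  assumes "p > 1" "q > 1" "\<sigma> \<ge> 0" "\<sigma>^2 = (p-1)*(q-1)" "\<sigma> < 1"
    and AB: "A \<subseteq> cube d" "B \<subseteq> cube d" and mA: "0 < mu d A" "mu d A \<le> 1/m"
    and "m \<ge> 1" "0 \<le> \<gamma>" and cp: "\<gamma> \<le> cond_prob d \<sigma> B A"
  shows "\<gamma> powr q * m powr (1 + q/p - q) \<le> mu d B / mu d A"
proof -
  define fB where "fB x = (if x \<in> B then 1 else 0::real)" for x
  define gA where "gA x = (if x \<in> A then 1 else 0::real)" for x
  have T: "(\<Sum>x\<in>cube d. \<Sum>y\<in>cube d. fB x * gA y * noise \<sigma> x y) / 2^d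
      \<le> ((\<Sum>x\<in>cube d. fB x powr q) / 2^d) powr (1/q) * ((\<Sum>y\<in>cube d. gA y powr p) / 2^d) powr (1/p)"
  proof -
    have sq: "\<sigma>^2 = (q-1)*(p-1)" using assms by (simp add: mult.commute)
    show ?thesis by (rule tensor[OF assms(2,1,3) sq assms(5), rule_format]) (auto simp: fB_def gA_def)
  qed
  have s1: "(\<Sum>x\<in>cube d. \<Sum>y\<in>cube d. fB x * gA y * noise \<sigma> x y) = (\<Sum>x\<in>B. \<Sum>y\<in>A. noise \<sigma> x y)"
  proof -
    have "(\<Sum>x\<in>cube d. \<Sum>y\<in>cube d. fB x * gA y * noise \<sigma> x y)
        = (\<Sum>x\<in>cube d. if x \<in> B then (\<Sum>y\<in>cube d. if y \<in> A then noise \<sigma> x y else 0) else 0)"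
      unfolding fB_def gA_def by (intro sum.cong refl) (auto intro: sum.cong)
    also have "\<dots> = (\<Sum>x\<in>B. \<Sum>y\<in>A. noise \<sigma> x y)"
      using AB by (simp add: sum_restrict_cube)
    finally show ?thesis .
  qed
  have s2: "(\<Sum>x\<in>cube d. fB x powr q) / 2^d = mu d B"
  proof -
    have "(\<Sum>x\<in>cube d. fB x powr q) = (\<Sum>x\<in>cube d. if x \<in> B then 1 else 0)"
      unfolding fB_def by (intro sum.cong refl) auto
    also have "\<dots> = real (card B)" using AB by (simp add: sum_restrict_cube)
    finally show ?thesis unfolding mu_def by simp
  qed
  have s3: "(\<Sum>y\<in>cube d. gA y powr p) / 2^d = mu d A"
  proof -
    have "(\<Sum>x\<in>cube d. gA x powr p) = (\<Sum>x\<in>cube d. if x \<in> A then 1 else 0)"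
      unfolding gA_def by (intro sum.cong refl) auto
    also have "\<dots> = real (card A)" using AB by (simp add: sum_restrict_cube)
    finally show ?thesis unfolding mu_def by simp
  qed
  have cpe: "cond_prob d \<sigma> B A * mu d A = (\<Sum>x\<in>B. \<Sum>y\<in>A. noise \<sigma> x y) / 2^d"
  proof -
    have "cond_prob d \<sigma> B A * mu d A = (\<Sum>x\<in>B. \<Sum>y\<in>A. joint d \<sigma> x y)"
      unfolding cond_prob_def using mA by simp
    also have "\<dots> = (\<Sum>x\<in>B. \<Sum>y\<in>A. noise \<sigma> x y) / 2^d"
      unfolding joint_def by (simp add: sum_divide_distrib)
    finally show ?thesis .
  qed
  have mB0: "0 \<le> mu d B" unfolding mu_def by simp
  have H: "\<gamma> * mu d A \<le> mu d B powr (1/q) * mu d A powr (1/p)"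
  proof -
    have "\<gamma> * mu d A \<le> cond_prob d \<sigma> B A * mu d A" using cp mA by (simp add: mult_right_mono)
    also have "\<dots> \<le> mu d B powr (1/q) * mu d A powr (1/p)" using T unfolding s1 s2 s3 cpe .
    finally show ?thesis .
  qed
  have "(\<gamma> * mu d A) powr q \<le> (mu d B powr (1/q) * mu d A powr (1/p)) powr q"
    using H assms mA by (intro powr_mono2) auto
  also have "\<dots> = mu d B * mu d A powr (q/p)"
    using assms mA mB0 by (simp add: powr_mult powr_powr)
  finally have H2: "\<gamma> powr q * mu d A powr q \<le> mu d B * mu d A powr (q/p)"
    using assms mA by (simp add: powr_mult)
  define e where "e = q - q/p - 1"
  have "p * e = (p-1)*(q-1) - 1" unfolding e_def using assms by (simp add: field_simps)
  moreover have "\<sigma>*\<sigma> \<le> \<sigma>" using assms by (simp add: mult_left_le_one_le)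
  ultimately have "p * e < 0" using assms by (simp add: power2_eq_square)
  then have e0: "e \<le> 0" using assms by (simp add: mult_less_0_iff)
  have pw: "mu d A powr q = mu d A powr e * (mu d A powr (q/p) * mu d A)"
    unfolding e_def using mA by (simp add: powr_add[symmetric] powr_diff)
  have H3: "\<gamma> powr q * mu d A powr e \<le> mu d B / mu d A"
  proof -
    have pos: "0 < mu d A powr (q/p) * mu d A" using mA by simp
    have "\<gamma> powr q * mu d A powr e * (mu d A powr (q/p) * mu d A) \<le> (mu d B / mu d A) * (mu d A powr (q/p) * mu d A)"
    proof -
      have eq: "(mu d B / mu d A) * (mu d A powr (q/p) * mu d A) = mu d B * mu d A powr (q/p)"
        using mA by simp
      show ?thesis unfolding eq using H2 unfolding pw by (simp add: mult_ac)
    qed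
    then show ?thesis using pos by (rule mult_right_le_imp_le)
  qed
  have m0: "0 < 1/m" using assms by simp
  have "(1/m) powr e \<le> mu d A powr e" using powr_mono2'[OF e0 mA(1) mA(2)] .
  moreover have "(1/m) powr e = m powr (1 + q/p - q)"
    unfolding e_def using assms by (simp add: powr_divide powr_minus_divide[symmetric] powr_minus) (simp add: algebra_simps)
  ultimately have "m powr (1 + q/p - q) \<le> mu d A powr e" by simp
  then have "\<gamma> powr q * m powr (1 + q/p - q) \<le> \<gamma> powr q * mu d A powr e"
    by (intro mult_left_mono) auto
  with H3 show ?thesis by linarith
qed

theorem lemma6p2:
  fixes d :: nat and c p q \<gamma> m :: real
  assumes "c > 1"
    and "p \<ge> 1" and "q \<ge> 1"
    and "(p - 1) * (q - 1) = (1 - 1 / c) ^ 2"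
    and "0 \<le> \<gamma>" and "\<gamma> \<le> 1"
    and "m \<ge> 1"
  shows "ereal (\<gamma> powr q * m powr (1 + q / p - q)) \<le> Phi_r d (1 - 1 / c) (1 / m) \<gamma>"
proof -
  define \<sigma> where "\<sigma> = 1 - 1/c"
  have s: "0 < \<sigma>" "\<sigma> < 1" unfolding \<sigma>_def using assms by (auto simp: field_simps)
  have "(p - 1) * (q - 1) > 0" using assms(4) s unfolding \<sigma>_def by simp
  then have pq: "p > 1" "q > 1" using assms(2,3)
    by (metis le_less mult_zero_left mult_zero_right diff_gt_0_iff_gt diff_self less_irrefl)+
  show ?thesis
    unfolding Phi_r_def
  proof (rule Inf_greatest, clarify)
    fix A B assume h: "A \<subseteq> cube d" "0 < mu d A" "mu d A \<le> 1/m" "B \<subseteq> cube d" "\<gamma> \<le> cond_prob d (1 - 1/c) B A"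
    show "ereal (\<gamma> powr q * m powr (1 + q / p - q)) \<le> ereal (mu d B / mu d A)"
    proof -
      have s0: "0 \<le> \<sigma>" using s by simp
      have sq: "\<sigma>^2 = (p-1)*(q-1)" using assms(4) unfolding \<sigma>_def by simp
      have cp: "\<gamma> \<le> cond_prob d \<sigma> B A" using h(5) unfolding \<sigma>_def .
      show ?thesis using key[OF pq s0 sq s(2) h(1,4,2,3) assms(7,5) cp] by simp
    qed
  qed
qed

end
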